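(* Let $(\vdash,\overline{\cdot},\widehat{\cdot})$ be a setting and let $\vdash^{\emptyset}$ be the restriction of $\vdash$ to those pairs $(\Gamma,\gamma)$ for which there is no $(\emptyset,\delta)\in{\vdash}$ with $\delta\in\overline{\psi}$ for some $\psi\in\widehat{\Gamma}$. Then for $\mathsf{Sem}\in\{\mathsf{Grd},\mathsf{Prf}\}$, every $\mathcal{S}\subseteq\mathcal{L}$ and every $\phi$: $\mathcal{S}\mathrel{\mid\!\sim}^{(\vdash,\overline{\cdot},\widehat{\cdot})}_{\mathsf{Sem}}\phi$ iff $\mathcal{S}\mathrel{\mid\!\sim}^{(\vdash^{\emptyset},\overline{\cdot},\widehat{\cdot})}_{\mathsf{Sem}}\phi$.
   Context: $\mathcal{L}$ is a set of formulas; $\wp_{\sf fin}(X)$ is the set of finite subsets of $X$. A setting is a triple $(\vdash,\overline{\cdot},\widehat{\cdot})$ with ${\vdash}\subseteq\wp_{\sf fin}(\mathcal{L})\times\mathcal{L}$ arbitrary, $\overline{\cdot}:\mathcal{L}\to\wp(\mathcal{L})$, and $\widehat{\cdot}$ assigning to each nonempty finite set of formulas a finite set of formulas, with $\widehat{\emptyset}=\emptyset$ (so arguments with empty support have no attackers). For $\mathcal{S}\subseteq\mathcal{L}$, $\mathit{Arg}_{\vdash}(\mathcal{S})=\{(\Gamma,\gamma):\Gamma\subseteq\mathcal{S}\text{ finite},\Gamma\vdash\gamma\}$; $\mathsf{Conc}((\Gamma,\gamma))=\gamma$. In $\mathcal{AF}_{\vdash}(\mathcal{S})$, $(\Gamma,\gamma)$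 attacks $(\Gamma',\gamma')$ iff $\gamma\in\overline{\phi}$ for some $\phi\in\widehat{\Gamma'}$. Dung semantics on $\mathit{Arg}_{\vdash}(\mathcal{S})$: conflict-free, defends (every attacker is attacked by a member), admissible (conflict-free and defends its members), complete (admissible and contains all it defends), preferred ($\subseteq$-maximal complete), grounded ($\subseteq$-minimal complete). $\mathcal{S}\mathrel{\mid\!\sim}^{\mathcal{AF}}_{\mathsf{Sem}}\phi$ iff every $\mathsf{Sem}$-extension of $\mathcal{AF}(\mathcal{S})$ contains an argument with conclusion $\phi$. *)

theory Defs
  imports Main
begin

definition conflict_free :: "('a \<Rightarrow> 'a \<Rightarrow> bool) \<Rightarrow> 'a set \<Rightarrow> bool" where
  "conflict_free att E \<longleftrightarrow> (\<forall>a\<in>E. \<forall>b\<in>E. \<not> att a b)"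

definition defends :: "'a set \<Rightarrow> ('a \<Rightarrow> 'a \<Rightarrow> bool) \<Rightarrow> 'a set \<Rightarrow> 'a \<Rightarrow> bool" where
  "defends A att E a \<longleftrightarrow> (\<forall>b\<in>A. att b a \<longrightarrow> (\<exists>c\<in>E. att c b))"

definition admissible :: "'a set \<Rightarrow> ('a \<Rightarrow> 'a \<Rightarrow> bool) \<Rightarrow> 'a set \<Rightarrow> bool" where
  "admissible A att E \<longleftrightarrow> E \<subseteq> A \<and> conflict_free att E \<and> (\<forall>a\<in>E. defends A att E a)"

definition complete_ext :: "'a set \<Rightarrow> ('a \<Rightarrow> 'a \<Rightarrow> bool) \<Rightarrow> 'a set \<Rightarrow> bool" where
  "complete_ext A att E \<longleftrightarrow> admissible A att E \<and> (\<forall>a\<in>A. defends A att E a \<longrightarrow> a \<in> E)"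

definition preferred_ext :: "'a set \<Rightarrow> ('a \<Rightarrow> 'a \<Rightarrow> bool) \<Rightarrow> 'a set \<Rightarrow> bool" where
  "preferred_ext A att E \<longleftrightarrow> complete_ext A att E \<and>
     (\<forall>E'. complete_ext A att E' \<and> E \<subseteq> E' \<longrightarrow> E' = E)"

definition grounded_ext :: "'a set \<Rightarrow> ('a \<Rightarrow> 'a \<Rightarrow> bool) \<Rightarrow> 'a set \<Rightarrow> bool" where
  "grounded_ext A att E \<longleftrightarrow> complete_ext A att E \<and>
     (\<forall>E'. complete_ext A att E' \<and> E' \<subseteq> E \<longrightarrow> E' = E)"

datatype semantics = Grd | Prf

definition sem_ext :: "semantics \<Rightarrow> 'a set \<Rightarrow> ('a \<Rightarrow> 'a \<Rightarrow> bool) \<Rightarrow> 'a set \<Rightarrow> bool" where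
  "sem_ext s = (case s of Grd \<Rightarrow> grounded_ext | Prf \<Rightarrow> preferred_ext)"

(* A setting over formulas of type 'f:
   der \<Gamma> \<gamma>  : \<Gamma> \<turnstile> \<gamma>  (only consulted for finite \<Gamma>)
   ctr \<phi>    : \<overline>{\<phi>}
   hat \<Gamma>    : \<widehat>{\<Gamma>} *)
type_synonym 'f arg = "'f set \<times> 'f"

definition setting :: "('f set \<Rightarrow> 'f \<Rightarrow> bool) \<Rightarrow> ('f \<Rightarrow> 'f set) \<Rightarrow> ('f set \<Rightarrow> 'f set) \<Rightarrow> bool" where
  "setting der ctr hat \<longleftrightarrow> hat {} = {} \<and> (\<forall>\<Gamma>. finite \<Gamma> \<longrightarrow> finite (hat \<Gamma>))"

definition Arg :: "('f set \<Rightarrow> 'f \<Rightarrow> bool) \<Rightarrow> 'f set \<Rightarrow> 'f arg set" where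
  "Arg der S = {(\<Gamma>, \<gamma>). finite \<Gamma> \<and> \<Gamma> \<subseteq> S \<and> der \<Gamma> \<gamma>}"

definition attacks :: "('f \<Rightarrow> 'f set) \<Rightarrow> ('f set \<Rightarrow> 'f set) \<Rightarrow> 'f arg \<Rightarrow> 'f arg \<Rightarrow> bool" where
  "attacks ctr hat a b \<longleftrightarrow> (\<exists>\<phi>\<in>hat (fst b). snd a \<in> ctr \<phi>)"

definition nm_entails ::
  "('f set \<Rightarrow> 'f \<Rightarrow> bool) \<Rightarrow> ('f \<Rightarrow> 'f set) \<Rightarrow> ('f set \<Rightarrow> 'f set) \<Rightarrow> semantics \<Rightarrow> 'f set \<Rightarrow> 'f \<Rightarrow> bool" where
  "nm_entails der ctr hat s S \<phi> \<longleftrightarrow>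
     (\<forall>E. sem_ext s (Arg der S) (attacks ctr hat) E \<longrightarrow> (\<exists>a\<in>E. snd a = \<phi>))"

definition der_empty :: "('f set \<Rightarrow> 'f \<Rightarrow> bool) \<Rightarrow> ('f \<Rightarrow> 'f set) \<Rightarrow> ('f set \<Rightarrow> 'f set) \<Rightarrow> 'f set \<Rightarrow> 'f \<Rightarrow> bool" where
  "der_empty der ctr hat \<Gamma> \<gamma> \<longleftrightarrow> der \<Gamma> \<gamma> \<and> \<not> (\<exists>\<delta>. der {} \<delta> \<and> (\<exists>\<psi>\<in>hat \<Gamma>. \<delta> \<in> ctr \<psi>))"

end

theory Submission
  imports Defs
begin

lemma Arg_sub: "Arg (der_empty der ctr hat) S \<subseteq> Arg der S"
  by (auto simp: Arg_def der_empty_def)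

lemma empty_in:
  assumes "hat {} = {}" "der {} \<delta>"
  shows "({}, \<delta>) \<in> Arg (der_empty der ctr hat) S" "({}, \<delta>) \<in> Arg der S"
  using assms by (auto simp: Arg_def der_empty_def)

lemma no_att_empty:
  assumes "hat {} = {}" shows "\<not> attacks ctr hat b ({}, \<delta>)"
  using assms by (simp add: attacks_def)

lemma notin_empty:
  assumes "a \<in> Arg der S" "a \<notin> Arg (der_empty der ctr hat) S"
  shows "\<exists>\<delta>. der {} \<delta> \<and> attacks ctr hat ({}, \<delta>) a"
  using assms by (cases a) (auto simp: Arg_def der_empty_def attacks_def)

lemma complete_empty_in:
  assumes "hat {} = {}" "complete_ext A (attacks ctr hat) E" "({}, \<delta>) \<in> A"
  shows "({}, \<delta>) \<in> E"
  using assms unfolding complete_ext_def defends_def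
  by (auto simp: attacks_def)

lemma complete_iff:
  assumes h: "hat {} = {}"
  shows "complete_ext (Arg der S) (attacks ctr hat) E \<longleftrightarrow>
         complete_ext (Arg (der_empty der ctr hat) S) (attacks ctr hat) E"
    (is "complete_ext ?A ?att E \<longleftrightarrow> complete_ext ?B ?att E")
proof
  assume c: "complete_ext ?A ?att E"
  have ein: "\<And>\<delta>. der {} \<delta> \<Longrightarrow> ({}, \<delta>) \<in> E"
    using complete_empty_in[where hat=hat, OF h c] empty_in(1)[where hat=hat and der=der and ctr=ctr and S=S, OF h] empty_in(2)[where hat=hat and der=der and S=S, OF h] by blast
  have cf: "conflict_free ?att E" and EA: "E \<subseteq> ?A" and dA: "\<forall>a\<in>E. defends ?A ?att E a"
    and cl: "\<forall>a\<in>?A. defends ?A ?att E a \<longrightarrow> a \<in> E"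
    using c by (auto simp: complete_ext_def admissible_def)
  have EB: "E \<subseteq> ?B"
  proof
    fix a assume a: "a \<in> E"
    show "a \<in> ?B"
    proof (rule ccontr)
      assume "a \<notin> ?B"
      then obtain \<delta> where "der {} \<delta>" "?att ({}, \<delta>) a" using notin_empty EA a by blast
      then show False using cf ein a by (auto simp: conflict_free_def)
    qed
  qed
  have dB: "\<And>a. defends ?A ?att E a \<Longrightarrow> defends ?B ?att E a"
    using Arg_sub[of der ctr hat S] unfolding defends_def by blast
  have dBA: "\<And>a. defends ?B ?att E a \<Longrightarrow> defends ?A ?att E a"
  proof -
    fix a assume d: "defends ?B ?att E a"
    show "defends ?A ?att E a" unfolding defends_def
    proof (intro ballI impI)
      fix b assume b: "b \<in> ?A" "?att b a"
      show "\<exists>c\<in>E. ?att c b"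
      proof (cases "b \<in> ?B")
        case True then show ?thesis using d b by (auto simp: defends_def)
      next
        case False
        then obtain \<delta> where "der {} \<delta>" "?att ({}, \<delta>) b" using notin_empty b by blast
        then show ?thesis using ein by blast
      qed
    qed
  qed
  show "complete_ext ?B ?att E"
    unfolding complete_ext_def admissible_def
    using EB cf dA dB dBA cl Arg_sub by blast
next
  assume c: "complete_ext ?B ?att E"
  have ein: "\<And>\<delta>. der {} \<delta> \<Longrightarrow> ({}, \<delta>) \<in> E"
    using complete_empty_in[where hat=hat, OF h c] empty_in(1)[where hat=hat and der=der and ctr=ctr and S=S, OF h] empty_in(2)[where hat=hat and der=der and S=S, OF h] by blast
  have cf: "conflict_free ?att E" and EB: "E \<subseteq> ?B" and dB: "\<forall>a\<in>E. defends ?B ?att E a"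
    and cl: "\<forall>a\<in>?B. defends ?B ?att E a \<longrightarrow> a \<in> E"
    using c by (auto simp: complete_ext_def admissible_def)
  have dBA: "\<And>a. defends ?B ?att E a \<Longrightarrow> defends ?A ?att E a"
  proof -
    fix a assume d: "defends ?B ?att E a"
    show "defends ?A ?att E a" unfolding defends_def
    proof (intro ballI impI)
      fix b assume b: "b \<in> ?A" "?att b a"
      show "\<exists>c\<in>E. ?att c b"
      proof (cases "b \<in> ?B")
        case True then show ?thesis using d b by (auto simp: defends_def)
      next
        case False
        then obtain \<delta> where "der {} \<delta>" "?att ({}, \<delta>) b" using notin_empty b by blast
        then show ?thesis using ein by blast
      qed
    qed
  qed
  have clA: "\<forall>a\<in>?A. defends ?A ?att E a \<longrightarrow> a \<in> E"
  proof (intro ballI impI)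
    fix a assume a: "a \<in> ?A" and d: "defends ?A ?att E a"
    have "a \<in> ?B"
    proof (rule ccontr)
      assume "a \<notin> ?B"
      then obtain \<delta> where dl: "der {} \<delta>" "?att ({}, \<delta>) a" using notin_empty a by blast
      then have "({}, \<delta>) \<in> ?A" using empty_in(1)[where hat=hat and der=der and ctr=ctr and S=S, OF h] empty_in(2)[where hat=hat and der=der and S=S, OF h] by blast
      then obtain c where "?att c ({}, \<delta>)" using d dl unfolding defends_def by blast
      then show False using no_att_empty[where hat=hat, OF h] by blast
    qed
    moreover have "defends ?B ?att E a" using d Arg_sub[of der ctr hat S] unfolding defends_def by blast
    ultimately show "a \<in> E" using cl by blast
  qed
  show "complete_ext ?A ?att E"
    unfolding complete_ext_def admissible_def
    using EB cf dB dBA clA Arg_sub by blast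
qed

theorem lemma1:
  fixes der :: "'f set \<Rightarrow> 'f \<Rightarrow> bool" and ctr :: "'f \<Rightarrow> 'f set" and hat :: "'f set \<Rightarrow> 'f set"
  assumes "setting der ctr hat"
  shows "nm_entails der ctr hat s S \<phi> \<longleftrightarrow> nm_entails (der_empty der ctr hat) ctr hat s S \<phi>"
proof -
  have h: "hat {} = {}" using assms by (simp add: setting_def)
  have "\<And>E. sem_ext s (Arg der S) (attacks ctr hat) E \<longleftrightarrow>
            sem_ext s (Arg (der_empty der ctr hat) S) (attacks ctr hat) E"
    using complete_iff[where hat=hat and der=der and S=S and ctr=ctr, OF h]
    by (cases s) (simp_all add: sem_ext_def grounded_ext_def preferred_ext_def)
  then show ?thesis by (simp add: nm_entails_def)
qed

end
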